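(* In the standing setup with a single fluid, and with $t_{\mathrm b},\xi_0,t_0$ as in the time-interval setup, write $h_{\mathrm b}=h(t_{\mathrm b})$, $x_{\mathrm b}=x(t_{\mathrm b})$. Then for all $t\in[t_{\mathrm b},t_0]$, $$|x(t)|\ \le\ \frac{1}{\big[1+\xi_0h_{\mathrm b}(t-t_{\mathrm b})\big]^{\frac{1}{\xi_0}-1}}\Big[|x_{\mathrm b}|-\frac{\sqrt2\,c\,l}{h_{\mathrm b}}\Big]+\sqrt2\,c\,l\Big[\xi_0(t-t_{\mathrm b})+\frac{1}{h_{\mathrm b}}\Big].$$
   Context: Standing setup. Fix real constants $c>0$ and $l>0$, a nonempty finite index set $A$, and constants $w_\alpha\in[-1,1]$ for $\alpha\in A$. Let $I\subseteq\mathbb{R}$ be an interval and let $x,y_{\mathrm r},y_{\mathrm i},h,z_\alpha$ ($\alpha\in A$) be real $C^1$ functions of $t\in I$ with $h>0$ and $z_\alpha\ge 0$. Define $\xi(t)=x(t)^2+\sum_{\beta\in A}\frac{1+w_\beta}{2}z_\beta(t)^2$. Assume that on $I$: $\dot x=\big[-x+4c\,y_{\mathrm r}y_{\mathrm i}+x\,\xi\big]h$, $\dot y_{\mathrm r}=\big[\xi\,y_{\mathrm r}-c\,x\,y_{\mathrm i}\big]h$, $\dot y_{\mathrm i}=\big[\xi\,y_{\mathrm i}+c\,x\,y_{\mathrm r}\big]h$, $\dot z_\alpha=\big[-\tfrac{1+w_\alpha}{2}+\xi\big]z_\alpha h$, $\dot h=-\xi h^2$, together with the constraints $x^2+4y_{\mathrm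 r}^2+\sum_{\beta\in A}z_\beta^2=1$ and $y_{\mathrm r}^2+y_{\mathrm i}^2=\frac{l^2}{2h^2}$. Single fluid: $A$ has exactly one element; write $z$ and $w$ for $z_\alpha$ and $w_\alpha$. Time-interval setup: let $t_{\mathrm b}\in I$, $\xi_{\mathrm b}:=\xi(t_{\mathrm b})$, and let $\xi_0$ be a real number with $\xi_0>0$ and $\xi_{\mathrm b}\le\xi_0\le\frac{1+w}{2}$. Assume the set $\{t\in I:\ t\ge t_{\mathrm b},\ \xi(t)=\xi_0\}$ is nonempty and let $t_0$ be its minimum (so $\xi(t)\le\xi_0$ for all $t\in[t_{\mathrm b},t_0]$); put $\Delta t_{\mathrm b0}=t_0-t_{\mathrm b}$. *)

theory Defs
  imports "HOL-Analysis.Analysis"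
begin

definition xi1 :: "real \<Rightarrow> (real \<Rightarrow> real) \<Rightarrow> (real \<Rightarrow> real) \<Rightarrow> real \<Rightarrow> real" where
  "xi1 w x z t = (x t)\<^sup>2 + (1 + w) / 2 * (z t)\<^sup>2"

definition C1_on :: "real set \<Rightarrow> (real \<Rightarrow> real) \<Rightarrow> (real \<Rightarrow> real) \<Rightarrow> bool" where
  "C1_on I f f' \<longleftrightarrow> (\<forall>t\<in>I. (f has_real_derivative f' t) (at t within I)) \<and> continuous_on I f'"

end

theory Submission
  imports Defs
begin


lemma comparison:
  fixes D D' :: "real \<Rightarrow> real" and a b :: real
  assumes ab: "a \<le> b"
    and der: "\<And>t. t \<in> {a..b} \<Longrightarrow> (D has_real_derivative D' t) (at t within {a..b})"
    and Da: "D a \<le> 0"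
    and neg: "\<And>t. t \<in> {a..b} \<Longrightarrow> D t > 0 \<Longrightarrow> D' t \<le> 0"
  shows "\<forall>t\<in>{a..b}. D t \<le> 0"
proof (rule ccontr)
  assume "\<not> ?thesis"
  then obtain t1 where t1: "t1 \<in> {a..b}" "D t1 > 0" by force
  have cont: "continuous_on {a..b} D"
    using der by (meson DERIV_continuous continuous_on_eq_continuous_within)
  define S where "S = {s \<in> {a..t1}. D s \<le> 0}"
  have "closed S" unfolding S_def
    by (rule continuous_on_closed_Collect_le) (use cont t1 in \<open>auto intro: continuous_on_subset\<close>)
  moreover have "a \<in> S" using Da t1 by (auto simp: S_def)
  moreover have bdd: "bdd_above S" by (auto simp: S_def bdd_above_def)
  ultimately have ts: "Sup S \<in> S" using closed_contains_Sup by blast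
  define ts where "ts = Sup S"
  have tsS: "ts \<in> S" using ts ts_def by simp
  have "ts < t1" using tsS t1 by (cases "ts = t1") (auto simp: S_def)
  have pos: "D s > 0" if "s \<in> {ts<..t1}" for s
  proof (rule ccontr)
    assume "\<not> D s > 0"
    then have "s \<in> S" using that tsS by (auto simp: S_def)
    then have "s \<le> ts" using bdd ts_def by (simp add: cSup_upper)
    then show False using that by simp
  qed
  have "a \<le> ts" using tsS by (auto simp: S_def)
  have sub: "{ts..t1} \<subseteq> {a..b}" using \<open>a \<le> ts\<close> t1 by auto
  have "\<exists>y\<in>{ts<..<t1}. D t1 - D ts = (\<lambda>h. h * D' y) (t1 - ts)"
    apply (rule mvt_simple[OF \<open>ts < t1\<close>])
  proof -
    fix y assume "ts \<le> y" "y \<le> t1"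
    then have "y \<in> {a..b}" using sub by auto
    from DERIV_subset[OF der[OF this] sub] show "(D has_derivative (\<lambda>h. h * D' y)) (at y within {ts..t1})"
      by (simp add: has_field_derivative_def mult_commute_abs)
  qed
  then obtain y where y: "y \<in> {ts<..<t1}" "D t1 - D ts = (t1 - ts) * D' y" by auto
  have "D' y \<le> 0" using neg[of y] pos[of y] y sub by auto
  then have "D t1 \<le> D ts" using y \<open>ts < t1\<close> mult_nonneg_nonpos[of "t1-ts" "D' y"] by linarith
  then show False using tsS t1 by (auto simp: S_def)
qed

lemma aux_s4: "(U::real) = 1 + hb * (e * s) \<Longrightarrow> U > 0 \<Longrightarrow> hb > 0 \<Longrightarrow>
  (1 - e) * (hb / U) * (E * Cst + K * (e * s + 1 / hb)) = (1 - e) * hb / U * E * Cst + (1 - e) * K"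
proof -
  assume U: "U = 1 + hb * (e * s)" "U > 0" "hb > 0"
  have k: "K * (e * s + 1 / hb) = K * U / hb" using U by (simp add: field_simps)
  have "(1 - e) * (hb / U) * (E * Cst + K * (e * s + 1 / hb)) = (1 - e) * (hb / U) * (E * Cst) + (1 - e) * (hb / U) * (K * U / hb)"
    unfolding k by (simp add: distrib_left)
  also have "(1 - e) * (hb / U) * (K * U / hb) = (1 - e) * K" using U(2,3) by (simp add: field_simps)
  finally show ?thesis by simp
qed

lemma aux_powr: "(u::real) > 0 \<Longrightarrow> p * u powr (p - 1) * (e * hb) / (u powr p * u powr p) = p * e * hb / (u * u powr p)"
  by (simp add: powr_diff field_simps)
lemma powr_deriv: "0 < e \<Longrightarrow> 0 < 1 + e*hb*(t-tb) \<Longrightarrow> ((\<lambda>t. 1 / (1 + e*hb*(t-tb)) powr p) has_real_derivative 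
   (- (p*e*hb) / (1 + e*hb*(t-tb)) * (1 / (1 + e*hb*(t-tb)) powr p))) (at t within J)"
  apply (rule derivative_eq_intros refl | simp)+
  apply (rule aux_powr, simp)
  done


theorem corollaryB2:
  fixes c l w :: real and I :: "real set"
    and x yr yi h z x' yr' yi' h' z' :: "real \<Rightarrow> real"
    and tb t0 \<xi>0 :: real
  assumes c_pos: "c > 0" and l_pos: "l > 0"
    and w_range: "-1 \<le> w" "w \<le> 1"
    and I_int: "is_interval I"
    and C1: "C1_on I x x'" "C1_on I yr yr'" "C1_on I yi yi'" "C1_on I h h'" "C1_on I z z'"
    and h_pos: "\<forall>t\<in>I. h t > 0"
    and z_nonneg: "\<forall>t\<in>I. z t \<ge> 0"
    and ode_x: "\<forall>t\<in>I. x' t = (- x t + 4 * c * yr t * yi t + x t * xi1 w x z t) * h t"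
    and ode_yr: "\<forall>t\<in>I. yr' t = (xi1 w x z t * yr t - c * x t * yi t) * h t"
    and ode_yi: "\<forall>t\<in>I. yi' t = (xi1 w x z t * yi t + c * x t * yr t) * h t"
    and ode_z: "\<forall>t\<in>I. z' t = (- (1 + w) / 2 + xi1 w x z t) * z t * h t"
    and ode_h: "\<forall>t\<in>I. h' t = - xi1 w x z t * (h t)\<^sup>2"
    and constr1: "\<forall>t\<in>I. (x t)\<^sup>2 + 4 * (yr t)\<^sup>2 + (z t)\<^sup>2 = 1"
    and constr2: "\<forall>t\<in>I. (yr t)\<^sup>2 + (yi t)\<^sup>2 = l\<^sup>2 / (2 * (h t)\<^sup>2)"
    and tb_in: "tb \<in> I"
    and xi0_pos: "\<xi>0 > 0"
    and xi0_ge: "xi1 w x z tb \<le> \<xi>0"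
    and xi0_le: "\<xi>0 \<le> (1 + w) / 2"
    and t0_in: "t0 \<in> I" and t0_ge: "tb \<le> t0" and xi_t0: "xi1 w x z t0 = \<xi>0"
    and t0_min: "\<forall>t\<in>I. tb \<le> t \<and> xi1 w x z t = \<xi>0 \<longrightarrow> t0 \<le> t"
  shows "\<forall>t\<in>{tb..t0}.
    \<bar>x t\<bar> \<le> 1 / (1 + \<xi>0 * h tb * (t - tb)) powr (1 / \<xi>0 - 1)
                * (\<bar>x tb\<bar> - sqrt 2 * c * l / h tb)
             + sqrt 2 * c * l * (\<xi>0 * (t - tb) + 1 / h tb)"
  proof -
  define J where "J = {tb..t0}"
  define xi where "xi = xi1 w x z"
  define hb where "hb = h tb"
  define K where "K = sqrt 2 * c * l"
  define p where "p = 1 / \<xi>0 - 1"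
  define u where "u = (\<lambda>t. 1 + \<xi>0 * hb * (t - tb))"
  define Cst where "Cst = \<bar>x tb\<bar> - K / hb"
  define B where "B = (\<lambda>t. 1 / u t powr p * Cst + K * (\<xi>0 * (t - tb) + 1 / hb))"
  have JI: "J \<subseteq> I"
    using mem_is_interval_1_I[OF I_int tb_in t0_in] by (auto simp: J_def)
  have hb_pos: "hb > 0" using h_pos tb_in hb_def by auto
  have xi0_le1: "\<xi>0 \<le> 1" using xi0_le w_range by simp
  have p_nonneg: "p \<ge> 0" using xi0_pos xi0_le1 by (simp add: p_def field_simps)
  have pxi: "p * \<xi>0 = 1 - \<xi>0" using xi0_pos by (simp add: p_def field_simps)
  have dJ: "\<And>f f' t. C1_on I f f' \<Longrightarrow> t \<in> J \<Longrightarrow> (f has_real_derivative f' t) (at t within J)"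
    unfolding C1_on_def using JI by (metis DERIV_subset subsetD)
  have dx: "\<And>t. t \<in> J \<Longrightarrow> (x has_real_derivative x' t) (at t within J)" by (rule dJ[OF C1(1)])
  have dz: "\<And>t. t \<in> J \<Longrightarrow> (z has_real_derivative z' t) (at t within J)" by (rule dJ[OF C1(5)])
  have dh: "\<And>t. t \<in> J \<Longrightarrow> (h has_real_derivative h' t) (at t within J)" by (rule dJ[OF C1(4)])
  have cont_xi: "continuous_on J xi"
  proof -
    have "continuous_on J x" using dx by (meson DERIV_continuous continuous_on_eq_continuous_within)
    moreover have "continuous_on J z" using dz by (meson DERIV_continuous continuous_on_eq_continuous_within)
    ultimately show ?thesis unfolding xi_def xi1_def by (intro continuous_intros)
  qed
  have xi_le: "xi t \<le> \<xi>0" if tJ: "t \<in> J" for t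
  proof (rule ccontr)
    assume "\<not> xi t \<le> \<xi>0"
    then have gt: "xi t > \<xi>0" by simp
    then have "t \<noteq> t0" using xi_t0 xi_def by auto
    then have tlt: "t < t0" using tJ J_def by auto
    have "continuous_on {tb..t} xi" using cont_xi tJ J_def by (auto intro: continuous_on_subset)
    then obtain s where s: "tb \<le> s" "s \<le> t" "xi s = \<xi>0"
      using IVT'[of xi tb \<xi>0 t] gt xi0_ge tJ J_def xi_def by auto
    have "s \<in> I" using s tJ JI J_def by auto
    then have "t0 \<le> s" using t0_min s xi_def by auto
    then show False using s tlt by simp
  qed
  have xi_nonneg: "xi t \<ge> 0" for t unfolding xi_def xi1_def using w_range by auto
  have h_low: "h t \<ge> hb / u t" and u_pos: "u t \<ge> 1" if tJ: "t \<in> J" for t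
  proof -
    show u1: "u t \<ge> 1" using tJ J_def xi0_pos hb_pos by (auto simp: u_def)
    define D where "D = (\<lambda>t. 1 / h t - 1 / hb - \<xi>0 * (t - tb))"
    have "\<forall>t\<in>{tb..t0}. D t \<le> 0"
    proof (rule comparison[where D' = "\<lambda>t. xi t - \<xi>0"])
      show "tb \<le> t0" by (rule t0_ge)
      show "D tb \<le> 0" by (simp add: D_def hb_def)
      show "xi t - \<xi>0 \<le> 0" if "t \<in> {tb..t0}" "0 < D t" for t using xi_le that J_def by auto
      fix t assume tJ': "t \<in> {tb..t0}"
      then have hp: "h t > 0" using h_pos JI J_def by auto
      have "(D has_real_derivative (- h' t / (h t)^2 - \<xi>0)) (at t within J)"
        unfolding D_def using dh[OF tJ'[folded J_def]] hp
        by (auto intro!: derivative_eq_intros simp: power2_eq_square)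
      moreover have "- h' t / (h t)^2 - \<xi>0 = xi t - \<xi>0"
        using ode_h tJ' JI J_def hp xi_def by auto
      ultimately show "(D has_real_derivative xi t - \<xi>0) (at t within {tb..t0})" using J_def by simp
    qed
    then have "D t \<le> 0" using tJ J_def by auto
    then have "1 / h t \<le> 1 / hb + \<xi>0 * (t - tb)" unfolding D_def by linarith
    also have "\<dots> = u t / hb" using hb_pos by (simp add: u_def field_simps)
    finally have "1 / h t \<le> u t / hb" .
    moreover have "h t > 0" using h_pos JI tJ by auto
    ultimately show "h t \<ge> hb / u t" using hb_pos u1
      by (simp add: field_simps)
  qed
  have g_bound: "\<bar>4 * c * yr t * yi t * h t\<bar> \<le> K" if tI: "t \<in> I" for t
  proof -
    have hp: "h t > 0" using h_pos tI by auto
    have a0: "(x t)^2 + 4*(yr t)^2 + (z t)^2 = 1" using constr1 tI by auto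
    have a: "(yr t)^2 \<le> 1/4" using a0 zero_le_power2[of "x t"] zero_le_power2[of "z t"] by linarith
    have b: "(yi t * h t)^2 \<le> l^2 / 2"
    proof -
      have b0: "(yr t)^2 + (yi t)^2 = l^2 / (2 * (h t)^2)" using constr2 tI by auto
      have "(yi t)^2 \<le> l^2 / (2 * (h t)^2)" using b0 zero_le_power2[of "yr t"] by linarith
      then have "(yi t)^2 * (h t)^2 \<le> l^2 / (2 * (h t)^2) * (h t)^2"
        by (rule mult_right_mono) auto
      then show ?thesis using hp by (simp add: power_mult_distrib)
    qed
    have "(4 * c * yr t * yi t * h t)^2 = 16 * c^2 * (yr t)^2 * (yi t * h t)^2"
      by (simp add: power_mult_distrib)
    also have "\<dots> \<le> 16 * c^2 * (1/4) * (l^2/2)"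
      using a b by (intro mult_mono) auto
    also have "\<dots> = K^2" by (simp add: K_def power_mult_distrib)
    finally have "(4 * c * yr t * yi t * h t)^2 \<le> K^2" .
    moreover have "K \<ge> 0" using c_pos l_pos by (simp add: K_def)
    ultimately show ?thesis using abs_le_square_iff by (metis abs_of_nonneg)
  qed
  have B_nonneg: "B t \<ge> 0" if tJ: "t \<in> J" for t
  proof -
    have u1: "u t \<ge> 1" using u_pos tJ by auto
    have "u t powr p \<ge> 1" using u1 p_nonneg by (simp add: ge_one_powr_ge_zero)
    then have E: "1 / u t powr p \<le> 1" "1 / u t powr p \<ge> 0" by (auto simp: divide_le_eq)
    have K0: "K \<ge> 0" using c_pos l_pos by (simp add: K_def)
    have "1 / u t powr p * Cst \<ge> 1 / u t powr p * (- K / hb)"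
      unfolding Cst_def by (intro mult_left_mono) auto
    moreover have "1 / u t powr p * (- K / hb) \<ge> - K / hb"
    proof -
      have "K / hb \<ge> 0" using K0 hb_pos by simp
      then have "1 / u t powr p * (K / hb) \<le> K / hb" using E by (intro mult_left_le_one_le) auto
      moreover have "1 / u t powr p * (- K / hb) = - (1 / u t powr p * (K / hb))" by simp
      ultimately show ?thesis by linarith
    qed
    moreover have "K * (\<xi>0 * (t - tb) + 1 / hb) \<ge> K / hb"
      using K0 tJ J_def xi0_pos by (auto intro!: mult_left_mono simp: divide_inverse)
    ultimately show ?thesis unfolding B_def by linarith
  qed
  have main: "\<forall>t\<in>J. \<sigma> * x t \<le> B t" if sig: "\<sigma> = 1 \<or> \<sigma> = -1" for \<sigma>
  proof -
    define B' where "B' = (\<lambda>t. - (p*\<xi>0*hb) / u t * (1 / u t powr p) * Cst + K * \<xi>0)"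
    have "\<forall>t\<in>{tb..t0}. (\<lambda>t. \<sigma> * x t - B t) t \<le> 0"
    proof (rule comparison[where D' = "\<lambda>t. \<sigma> * x' t - B' t"])
      show "tb \<le> t0" by (rule t0_ge)
      show "\<sigma> * x tb - B tb \<le> 0" using sig by (auto simp: B_def u_def Cst_def)
      fix t assume tJ': "t \<in> {tb..t0}"
      have tJ: "t \<in> J" using tJ' J_def by simp
      have up: "0 < 1 + \<xi>0 * hb * (t - tb)" using u_pos[OF tJ] u_def by auto
      have "((\<lambda>t. 1 / (1 + \<xi>0*hb*(t-tb)) powr p) has_real_derivative 
         (- (p*\<xi>0*hb) / (1 + \<xi>0*hb*(t-tb)) * (1 / (1 + \<xi>0*hb*(t-tb)) powr p))) (at t within J)"
        by (rule powr_deriv[OF xi0_pos up])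
      then have d1: "((\<lambda>t. 1 / (1 + \<xi>0*hb*(t-tb)) powr p * Cst) has_real_derivative 
         (- (p*\<xi>0*hb) / (1 + \<xi>0*hb*(t-tb)) * (1 / (1 + \<xi>0*hb*(t-tb)) powr p)) * Cst) (at t within J)"
        by (rule DERIV_cmult_right)
      have d2: "((\<lambda>t. K * (\<xi>0 * (t - tb) + 1 / hb)) has_real_derivative K * \<xi>0) (at t within J)"
        by (auto intro!: derivative_eq_intros)
      have d3: "((\<lambda>t. \<sigma> * x t) has_real_derivative \<sigma> * x' t) (at t within J)"
        by (rule DERIV_cmult[OF dx[OF tJ]])
      have "((\<lambda>t. \<sigma> * x t - (1 / (1 + \<xi>0*hb*(t-tb)) powr p * Cst + K * (\<xi>0 * (t - tb) + 1 / hb))) has_real_derivative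
          \<sigma> * x' t - ((- (p*\<xi>0*hb) / (1 + \<xi>0*hb*(t-tb)) * (1 / (1 + \<xi>0*hb*(t-tb)) powr p)) * Cst + K * \<xi>0)) (at t within J)"
        by (rule DERIV_diff[OF d3 DERIV_add[OF d1 d2]])
      then show "((\<lambda>t. \<sigma> * x t - B t) has_real_derivative \<sigma> * x' t - B' t) (at t within {tb..t0})"
        unfolding B_def B'_def u_def J_def by simp
    next
      fix t assume tJ': "t \<in> {tb..t0}" and pos: "0 < \<sigma> * x t - B t"
      have tJ: "t \<in> J" using tJ' J_def by simp
      have tI: "t \<in> I" using tJ JI by auto
      define v where "v = \<sigma> * x t"
      have vB: "v > B t" using pos v_def by simp
      have v0: "v > 0" using vB B_nonneg[OF tJ] by simp
      have hp: "h t > 0" using h_pos tI by auto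
      have u1: "u t \<ge> 1" using u_pos tJ by auto
      have eq1: "\<sigma> * x' t = - (1 - xi t) * h t * v + \<sigma> * (4 * c * yr t * yi t * h t)"
      proof -
        have ex: "x' t = (- x t + 4 * c * yr t * yi t + x t * xi1 w x z t) * h t" using ode_x tI by blast
        show ?thesis unfolding v_def xi_def ex by (simp add: algebra_simps)
      qed
      have g: "\<sigma> * (4 * c * yr t * yi t * h t) \<le> K" using g_bound[OF tI] sig by auto
      have s1: "(1 - xi t) * h t * v \<ge> (1 - \<xi>0) * h t * v"
        using xi_le[OF tJ] hp v0 by (intro mult_right_mono) auto
      have s2: "(1 - \<xi>0) * h t * v \<ge> (1 - \<xi>0) * (hb / u t) * v"
        using h_low[OF tJ] xi0_le1 v0 by (intro mult_right_mono mult_left_mono) auto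
      have s3: "(1 - \<xi>0) * (hb / u t) * v \<ge> (1 - \<xi>0) * (hb / u t) * B t"
        using vB xi0_le1 hb_pos u1 by (intro mult_left_mono) auto
      have s4: "(1 - \<xi>0) * (hb / u t) * B t = (1 - \<xi>0) * hb / u t * (1 / u t powr p) * Cst + (1 - \<xi>0) * K"
        unfolding B_def by (rule aux_s4) (use u1 hb_pos in \<open>auto simp: u_def\<close>)
      have s5: "B' t = - (1 - \<xi>0) * hb / u t * (1 / u t powr p) * Cst + K * \<xi>0"
      proof -
        have pe0: "p*\<xi>0*hb = (1 - \<xi>0) * hb" by (simp only: pxi)
        have pe: "- (p*\<xi>0*hb) = - (1 - \<xi>0) * hb" unfolding pe0 by (rule minus_mult_left)
        show ?thesis unfolding B'_def pe by (rule refl)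
      qed
      show "\<sigma> * x' t - B' t \<le> 0"
      proof -
        define Q where "Q = (1 - \<xi>0) * hb / u t * (1 / u t powr p) * Cst"
        define G where "G = \<sigma> * (4 * c * yr t * yi t * h t)"
        define A where "A = (1 - xi t) * h t * v"
        have e1: "\<sigma> * x' t = G - A" using eq1 unfolding G_def A_def by (simp add: algebra_simps)
        have e5: "B' t = - Q + K * \<xi>0" unfolding s5 Q_def by (simp only: minus_mult_left minus_divide_left)
        have e4: "(1 - \<xi>0) * (hb / u t) * B t = Q + (K - K * \<xi>0)" using s4 unfolding Q_def
          by (simp add: algebra_simps)
        have "A \<ge> (1 - \<xi>0) * (hb / u t) * B t" using s1 s2 s3 unfolding A_def by linarith
        then show ?thesis using e1 e4 e5 g unfolding G_def by linarith
      qed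
    qed
    then show ?thesis using J_def by auto
  qed
  show ?thesis
  proof
    fix t assume "t \<in> {tb..t0}"
    then have tJ: "t \<in> J" using J_def by simp
    have "x t \<le> B t" "- x t \<le> B t" using main[of 1] main[of "-1"] tJ by auto
    then have "\<bar>x t\<bar> \<le> B t" by simp
    then show "\<bar>x t\<bar> \<le> 1 / (1 + \<xi>0 * h tb * (t - tb)) powr (1 / \<xi>0 - 1)
                * (\<bar>x tb\<bar> - sqrt 2 * c * l / h tb)
             + sqrt 2 * c * l * (\<xi>0 * (t - tb) + 1 / h tb)"
      by (simp add: B_def u_def p_def Cst_def K_def hb_def)
  qed
qed

end
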